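(* Let $S,T$ be stochastic matrices on a finite set $\Omega$, both reversible w.r.t. a probability measure $\mu$ with full support and both positive semidefinite, and assume $S^2=S$. Then for every $a\in[0,1]$, $$\lambda(STS)\ge\lambda(aS+(1-a)T).$$
   Context: $\langle f,g\rangle_\mu=\sum_{x}f(x)g(x)\mu(x)$, $\mu(f)=\sum_xf(x)\mu(x)$. A matrix $P$ is positive semidefinite if it is self-adjoint in $L_2(\mu)$ and $\langle f,Pf\rangle_\mu\ge0$ for all $f$. For a positive semidefinite stochastic $P$ reversible w.r.t. $\mu$, $\lambda(P)=1-\sup\{\langle f,Pf\rangle_\mu:\mu(f)=0,\ \langle f,f\rangle_\mu\le1\}$ (equal to $1$ minus the second largest eigenvalue when $P$ is irreducible, which coincides with the absolute spectral gap). *)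

theory Defs
  imports Complex_Main
begin

definition mat_mult :: "('a::finite \<Rightarrow> 'a \<Rightarrow> real) \<Rightarrow> ('a \<Rightarrow> 'a \<Rightarrow> real) \<Rightarrow> ('a \<Rightarrow> 'a \<Rightarrow> real)" where
  "mat_mult P Q = (\<lambda>x y. \<Sum>z\<in>UNIV. P x z * Q z y)"

definition mat_apply :: "('a::finite \<Rightarrow> 'a \<Rightarrow> real) \<Rightarrow> ('a \<Rightarrow> real) \<Rightarrow> ('a \<Rightarrow> real)" where
  "mat_apply P f = (\<lambda>x. \<Sum>y\<in>UNIV. P x y * f y)"

definition inner_mu :: "('a::finite \<Rightarrow> real) \<Rightarrow> ('a \<Rightarrow> real) \<Rightarrow> ('a \<Rightarrow> real) \<Rightarrow> real" where
  "inner_mu \<mu> f g = (\<Sum>x\<in>UNIV. f x * g x * \<mu> x)"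

definition mean_mu :: "('a::finite \<Rightarrow> real) \<Rightarrow> ('a \<Rightarrow> real) \<Rightarrow> real" where
  "mean_mu \<mu> f = (\<Sum>x\<in>UNIV. f x * \<mu> x)"

definition prob_full_support :: "('a::finite \<Rightarrow> real) \<Rightarrow> bool" where
  "prob_full_support \<mu> \<longleftrightarrow> (\<forall>x. \<mu> x > 0) \<and> (\<Sum>x\<in>UNIV. \<mu> x) = 1"

definition stochastic :: "('a::finite \<Rightarrow> 'a \<Rightarrow> real) \<Rightarrow> bool" where
  "stochastic P \<longleftrightarrow> (\<forall>x y. P x y \<ge> 0) \<and> (\<forall>x. (\<Sum>y\<in>UNIV. P x y) = 1)"

definition reversible :: "('a::finite \<Rightarrow> real) \<Rightarrow> ('a \<Rightarrow> 'a \<Rightarrow> real) \<Rightarrow> bool" where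
  "reversible \<mu> P \<longleftrightarrow> (\<forall>x y. \<mu> x * P x y = \<mu> y * P y x)"

definition self_adjoint_mu :: "('a::finite \<Rightarrow> real) \<Rightarrow> ('a \<Rightarrow> 'a \<Rightarrow> real) \<Rightarrow> bool" where
  "self_adjoint_mu \<mu> P \<longleftrightarrow> (\<forall>f g. inner_mu \<mu> f (mat_apply P g) = inner_mu \<mu> (mat_apply P f) g)"

definition psd_mu :: "('a::finite \<Rightarrow> real) \<Rightarrow> ('a \<Rightarrow> 'a \<Rightarrow> real) \<Rightarrow> bool" where
  "psd_mu \<mu> P \<longleftrightarrow> self_adjoint_mu \<mu> P \<and> (\<forall>f. inner_mu \<mu> f (mat_apply P f) \<ge> 0)"

definition spectral_gap :: "('a::finite \<Rightarrow> real) \<Rightarrow> ('a \<Rightarrow> 'a \<Rightarrow> real) \<Rightarrow> real" where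
  "spectral_gap \<mu> P = 1 - Sup {inner_mu \<mu> f (mat_apply P f) | f. mean_mu \<mu> f = 0 \<and> inner_mu \<mu> f f \<le> 1}"

end

theory Submission
  imports Defs
begin

lemma mat_apply_mult: "mat_apply (mat_mult P Q) f = mat_apply P (mat_apply Q f)"
  unfolding mat_apply_def mat_mult_def
  by (auto simp: sum_distrib_left sum_distrib_right mult.assoc intro!: ext sum.swap[THEN trans])

lemma contraction:
  assumes "stochastic P" "reversible \<mu> P" "\<forall>x. \<mu> x \<ge> 0"
  shows "inner_mu \<mu> g (mat_apply P g) \<le> inner_mu \<mu> g g"
proof -
  have e1: "inner_mu \<mu> g (mat_apply P g) = (\<Sum>x\<in>UNIV. \<Sum>y\<in>UNIV. \<mu> x * P x y * (g x * g y))"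
    unfolding inner_mu_def mat_apply_def
    by (auto simp: sum_distrib_left sum_distrib_right mult_ac intro!: sum.cong)
  have le: "\<mu> x * P x y * (g x * g y) \<le> \<mu> x * P x y * ((g x)^2 + (g y)^2) / 2" for x y
  proof -
    have "0 \<le> \<mu> x * P x y" using assms unfolding stochastic_def by simp
    moreover have "g x * g y \<le> ((g x)^2 + (g y)^2) / 2"
      using sum_squares_ge_zero[of "g x - g y" 0] by (simp add: power2_eq_square algebra_simps)
    ultimately show ?thesis using mult_left_mono by fastforce
  qed
  have a: "(\<Sum>x\<in>UNIV. \<Sum>y\<in>UNIV. \<mu> x * P x y * (g x)^2) = inner_mu \<mu> g g"
  proof -
    have "(\<Sum>x\<in>UNIV. \<Sum>y\<in>UNIV. \<mu> x * P x y * (g x)^2) = (\<Sum>x\<in>UNIV. \<mu> x * (g x)^2 * (\<Sum>y\<in>UNIV. P x y))"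
      by (intro sum.cong refl, simp only: sum_distrib_left, simp add: mult_ac)
    also have "\<dots> = inner_mu \<mu> g g" using assms(1) unfolding stochastic_def inner_mu_def
      by (simp add: power2_eq_square mult_ac)
    finally show ?thesis .
  qed
  have b: "(\<Sum>x\<in>UNIV. \<Sum>y\<in>UNIV. \<mu> x * P x y * (g y)^2) = inner_mu \<mu> g g"
  proof -
    have "(\<Sum>x\<in>UNIV. \<Sum>y\<in>UNIV. \<mu> x * P x y * (g y)^2) = (\<Sum>x\<in>UNIV. \<Sum>y\<in>UNIV. \<mu> y * P y x * (g y)^2)"
      using assms(2) unfolding reversible_def by simp
    also have "\<dots> = (\<Sum>y\<in>UNIV. \<Sum>x\<in>UNIV. \<mu> y * P y x * (g y)^2)" by (rule sum.swap)
    also have "\<dots> = inner_mu \<mu> g g"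
    proof -
      have "(\<Sum>y\<in>UNIV. \<Sum>x\<in>UNIV. \<mu> y * P y x * (g y)^2) = (\<Sum>y\<in>UNIV. \<mu> y * (g y)^2 * (\<Sum>x\<in>UNIV. P y x))"
        by (intro sum.cong refl, simp only: sum_distrib_left, simp add: mult_ac)
      also have "\<dots> = inner_mu \<mu> g g" using assms(1) unfolding stochastic_def inner_mu_def
        by (simp add: power2_eq_square mult_ac)
      finally show ?thesis .
    qed
    finally show ?thesis .
  qed
  have "inner_mu \<mu> g (mat_apply P g) \<le> (\<Sum>x\<in>UNIV. \<Sum>y\<in>UNIV. \<mu> x * P x y * ((g x)^2 + (g y)^2) / 2)"
    unfolding e1 by (intro sum_mono le)
  also have "\<dots> = ((\<Sum>x\<in>UNIV. \<Sum>y\<in>UNIV. \<mu> x * P x y * (g x)^2) + (\<Sum>x\<in>UNIV. \<Sum>y\<in>UNIV. \<mu> x * P x y * (g y)^2)) / 2"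
    by (simp add: sum_divide_distrib[symmetric] sum.distrib[symmetric] algebra_simps)
  also have "\<dots> = inner_mu \<mu> g g" using a b by simp
  finally show ?thesis .
qed

lemma mean_preserve:
  assumes "stochastic P" "reversible \<mu> P"
  shows "mean_mu \<mu> (mat_apply P f) = mean_mu \<mu> f"
proof -
  have "mean_mu \<mu> (mat_apply P f) = (\<Sum>x\<in>UNIV. \<Sum>y\<in>UNIV. \<mu> x * P x y * f y)"
    unfolding mean_mu_def mat_apply_def by (intro sum.cong refl, simp only: sum_distrib_right, simp add: mult_ac)
  also have "\<dots> = (\<Sum>x\<in>UNIV. \<Sum>y\<in>UNIV. \<mu> y * P y x * f y)"
    using assms(2) unfolding reversible_def by simp
  also have "\<dots> = (\<Sum>y\<in>UNIV. \<Sum>x\<in>UNIV. \<mu> y * P y x * f y)" by (rule sum.swap)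
  also have "\<dots> = (\<Sum>y\<in>UNIV. f y * \<mu> y * (\<Sum>x\<in>UNIV. P y x))"
    by (intro sum.cong refl, simp only: sum_distrib_left, simp add: mult_ac)
  also have "\<dots> = mean_mu \<mu> f" using assms(1) unfolding stochastic_def mean_mu_def by simp
  finally show ?thesis .
qed

lemma inner_comb:
  "inner_mu \<mu> g (mat_apply (\<lambda>x y. a * S x y + (1 - a) * T x y) g)
   = a * inner_mu \<mu> g (mat_apply S g) + (1 - a) * inner_mu \<mu> g (mat_apply T g)"
  unfolding inner_mu_def mat_apply_def
  by (simp add: sum_distrib_left sum_distrib_right sum.distrib[symmetric] algebra_simps)

theorem mainTheorem13:
  fixes \<mu> :: "'a::finite \<Rightarrow> real" and S T :: "'a \<Rightarrow> 'a \<Rightarrow> real" and a :: real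
  assumes "prob_full_support \<mu>"
    and "stochastic S" and "stochastic T"
    and "reversible \<mu> S" and "reversible \<mu> T"
    and "psd_mu \<mu> S" and "psd_mu \<mu> T"
    and "mat_mult S S = S"
    and "0 \<le> a" and "a \<le> 1"
  shows "spectral_gap \<mu> (mat_mult (mat_mult S T) S)
           \<ge> spectral_gap \<mu> (\<lambda>x y. a * S x y + (1 - a) * T x y)"
proof -
  let ?Q = "\<lambda>x y. a * S x y + (1 - a) * T x y"
  let ?A = "{inner_mu \<mu> f (mat_apply (mat_mult (mat_mult S T) S) f) | f. mean_mu \<mu> f = 0 \<and> inner_mu \<mu> f f \<le> 1}"
  let ?B = "{inner_mu \<mu> f (mat_apply ?Q f) | f. mean_mu \<mu> f = 0 \<and> inner_mu \<mu> f f \<le> 1}"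
  have mu: "\<forall>x. \<mu> x \<ge> 0" using assms(1) unfolding prob_full_support_def by (simp add: less_imp_le)
  have sa: "self_adjoint_mu \<mu> S" using assms(6) unfolding psd_mu_def by simp
  have SS: "mat_apply S (mat_apply S f) = mat_apply S f" for f
    using mat_apply_mult[of S S f] assms(8) by simp
  have Qst: "stochastic ?Q" using assms(2,3,9,10) unfolding stochastic_def
    by (auto simp: sum.distrib sum_distrib_left[symmetric])
  have Qrev: "reversible \<mu> ?Q" using assms(4,5) unfolding reversible_def by (simp add: algebra_simps)
  have "?A \<noteq> {}"
  proof -
    have "mean_mu \<mu> (\<lambda>_. 0) = 0" "inner_mu \<mu> (\<lambda>_. 0) (\<lambda>_. 0) \<le> 1"
      unfolding mean_mu_def inner_mu_def by simp_all
    then show ?thesis by blast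
  qed
  moreover have "bdd_above ?B"
  proof (rule bdd_aboveI[where M=1])
    fix x assume "x \<in> ?B"
    then obtain f where "x = inner_mu \<mu> f (mat_apply ?Q f)" "inner_mu \<mu> f f \<le> 1" by blast
    then show "x \<le> 1" using contraction[OF Qst Qrev mu, of f] by linarith
  qed
  moreover have "\<forall>b\<in>?A. \<exists>c\<in>?B. b \<le> c"
  proof
    fix b assume "b \<in> ?A"
    then obtain f where b: "b = inner_mu \<mu> f (mat_apply (mat_mult (mat_mult S T) S) f)"
      and m: "mean_mu \<mu> f = 0" and n: "inner_mu \<mu> f f \<le> 1" by blast
    define g where "g = mat_apply S f"
    have bg: "b = inner_mu \<mu> g (mat_apply T g)"
      unfolding b mat_apply_mult g_def using sa unfolding self_adjoint_mu_def by simp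
    have mg: "mean_mu \<mu> g = 0" unfolding g_def using mean_preserve[OF assms(2,4)] m by simp
    have gg: "inner_mu \<mu> g g = inner_mu \<mu> f (mat_apply S f)"
      unfolding g_def using sa SS unfolding self_adjoint_mu_def by metis
    have ng: "inner_mu \<mu> g g \<le> 1" using gg contraction[OF assms(2,4) mu, of f] n by linarith
    have gS: "inner_mu \<mu> g (mat_apply S g) = inner_mu \<mu> g g" unfolding g_def SS by simp
    have Tc: "inner_mu \<mu> g (mat_apply T g) \<le> inner_mu \<mu> g g" by (rule contraction[OF assms(3,5) mu])
    have "a * (inner_mu \<mu> g g - inner_mu \<mu> g (mat_apply T g)) \<ge> 0"
      using Tc assms(9) by simp
    then have "b \<le> inner_mu \<mu> g (mat_apply ?Q g)"
      unfolding inner_comb gS bg by (simp add: algebra_simps)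
    moreover have "inner_mu \<mu> g (mat_apply ?Q g) \<in> ?B" using mg ng by blast
    ultimately show "\<exists>c\<in>?B. b \<le> c" by blast
  qed
  ultimately have "Sup ?A \<le> Sup ?B" by (intro cSup_mono) auto
  then show ?thesis unfolding spectral_gap_def by linarith
qed

end
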